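(* Let $n\ge 2$. There exists a bijection from $T_n$ to $P_n$, where $T_n$ is the set of labeled threshold graphs on the vertex set $\{1,\dots,n\}$ and $P_n=\{(\pi,A):\pi\in\mathcal{S}_n^+,\ A\subseteq\mathrm{Asc}(\pi)\}$.
   Context: A threshold graph is a graph obtainable from the empty graph by repeatedly adding a new vertex that is either adjacent to all existing vertices or to none; labeled threshold graphs on $n$ vertices have vertex set $\{1,\dots,n\}$ and are distinguished by their edge sets. $\mathcal{S}_n$ is the set of permutations of $\{1,\dots,n\}$ in one-line notation $\pi=\pi_1\cdots\pi_n$. A position $i$ with $1\le i\le n-1$ is an ascent of $\pi$ if $\pi_i<\pi_{i+1}$, and $\mathrm{Asc}(\pi)$ is the set of ascents of $\pi$. For $n\ge 2$, $\mathcal{S}_n^+$ is the set of $\pi\in\mathcal{S}_n$ with $\pi_1<\pi_2$. *)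

theory Defs
  imports "HOL-Combinatorics.Permutations"
begin

inductive threshold_graph :: "'a set \<Rightarrow> 'a set set \<Rightarrow> bool" where
  empty: "threshold_graph {} {}"
| isolated: "\<lbrakk>threshold_graph V E; v \<notin> V\<rbrakk> \<Longrightarrow> threshold_graph (insert v V) E"
| dominating: "\<lbrakk>threshold_graph V E; v \<notin> V\<rbrakk>
     \<Longrightarrow> threshold_graph (insert v V) (E \<union> {{v, u} | u. u \<in> V})"

definition T :: "nat \<Rightarrow> nat set set set" where
  "T n = {E. threshold_graph {1..n} E}"

definition Asc :: "nat \<Rightarrow> (nat \<Rightarrow> nat) \<Rightarrow> nat set" where
  "Asc n p = {i. 1 \<le> i \<and> i \<le> n - 1 \<and> p i < p (Suc i)}"

definition S_plus :: "nat \<Rightarrow> (nat \<Rightarrow> nat) set" where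
  "S_plus n = {p. p permutes {1..n} \<and> p 1 < p 2}"

definition P :: "nat \<Rightarrow> ((nat \<Rightarrow> nat) \<times> nat set) set" where
  "P n = {(p, A). p \<in> S_plus n \<and> A \<subseteq> Asc n p}"

end

theory Submission
  imports Defs
begin

definition Gr :: "nat \<Rightarrow> (nat \<Rightarrow> nat) \<Rightarrow> (nat \<Rightarrow> bool) \<Rightarrow> nat set set" where
  "Gr k p t = {{p i, p j} | i j. 1 \<le> i \<and> i < j \<and> j \<le> k \<and> t j}"

primrec tA :: "nat set \<Rightarrow> nat \<Rightarrow> bool" where
  "tA A 0 = (1 \<in> A)"
| "tA A (Suc i) = (if 2 \<le> i \<and> i \<notin> A then \<not> tA A i else tA A i)"

definition canon :: "nat \<Rightarrow> (nat \<Rightarrow> nat) \<Rightarrow> (nat \<Rightarrow> bool) \<Rightarrow> bool" where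
  "canon k p t \<longleftrightarrow> t 1 = t 2 \<and> (\<forall>i. 1 \<le> i \<and> i < k \<and> t i = t (Suc i) \<longrightarrow> p i < p (Suc i))"

definition univ :: "nat set \<Rightarrow> nat set set \<Rightarrow> bool \<Rightarrow> nat \<Rightarrow> bool" where
  "univ V E \<tau> v \<longleftrightarrow> v \<in> V \<and> (\<forall>u\<in>V. u \<noteq> v \<longrightarrow> ({u, v} \<in> E \<longleftrightarrow> \<tau>))"

lemma Gr_cong_sub:
  assumes "\<forall>i\<in>{1..k}. p i = q i" "\<forall>i\<in>{2..k}. t i = s i"
  shows "Gr k p t \<subseteq> Gr k q s"
proof
  fix e assume "e \<in> Gr k p t"
  then obtain i j where ij: "e = {p i, p j}" "1 \<le> i" "i < j" "j \<le> k" "t j" unfolding Gr_def by blast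
  have "p i = q i" "p j = q j" using ij assms(1) by auto
  moreover have "t j = s j" using ij assms(2) by auto
  ultimately have "e = {q i, q j}" "s j" using ij by auto
  then show "e \<in> Gr k q s" unfolding Gr_def using ij by blast
qed

lemma Gr_cong:
  assumes "\<forall>i\<in>{1..k}. p i = q i" "\<forall>i\<in>{2..k}. t i = s i"
  shows "Gr k p t = Gr k q s"
  using Gr_cong_sub[OF assms] Gr_cong_sub[of k q p s t] assms by (simp add: subset_antisym)

lemma Gr_Suc:
  "Gr (Suc k) p t = Gr k p t \<union> (if t (Suc k) then {{p i, p (Suc k)} | i. 1 \<le> i \<and> i \<le> k} else {})"
proof -
  have a: "Gr k p t \<subseteq> Gr (Suc k) p t" unfolding Gr_def by fastforce
  have b: "{{p i, p (Suc k)} | i. 1 \<le> i \<and> i \<le> k} \<subseteq> Gr (Suc k) p t" if "t (Suc k)"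
    unfolding Gr_def using that by fastforce
  have c: "Gr (Suc k) p t \<subseteq> Gr k p t \<union> (if t (Suc k) then {{p i, p (Suc k)} | i. 1 \<le> i \<and> i \<le> k} else {})"
    unfolding Gr_def by (auto simp: le_Suc_eq less_Suc_eq_le)
  show ?thesis using a b c by auto
qed

lemma Gr_0: "Gr 0 p t = {}"
  unfolding Gr_def by auto

lemma Gr_edge:
  assumes "inj_on p {1..K}" "1 \<le> i" "i < j" "j \<le> K"
  shows "{p i, p j} \<in> Gr K p t \<longleftrightarrow> t j"
proof
  assume "{p i, p j} \<in> Gr K p t"
  then obtain a b where ab: "{p i, p j} = {p a, p b}" "1 \<le> a" "a < b" "b \<le> K" "t b"
    unfolding Gr_def by blast
  then have "(p i = p a \<and> p j = p b) \<or> (p i = p b \<and> p j = p a)" by (simp add: doubleton_eq_iff)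
  then have "(i = a \<and> j = b) \<or> (i = b \<and> j = a)"
  proof -
    have m: "i \<in> {1..K}" "j \<in> {1..K}" "a \<in> {1..K}" "b \<in> {1..K}" using assms ab by auto
    show ?thesis using \<open>(p i = p a \<and> p j = p b) \<or> (p i = p b \<and> p j = p a)\<close>
    proof
      assume "p i = p a \<and> p j = p b"
      then show ?thesis using inj_onD[OF assms(1)] m by blast
    next
      assume "p i = p b \<and> p j = p a"
      then show ?thesis using inj_onD[OF assms(1)] m by blast
    qed
  qed
  then show "t j" using ab assms by auto
next
  assume "t j" then show "{p i, p j} \<in> Gr K p t" unfolding Gr_def using assms by blast
qed

lemma Gr_threshold: "inj_on p {1..k} \<Longrightarrow> threshold_graph (p ` {1..k}) (Gr k p t)"
proof (induction k)
  case 0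
  then show ?case by (simp add: Gr_0 threshold_graph.empty)
next
  case (Suc k)
  have inj: "inj_on p {1..k}" using Suc.prems by (rule inj_on_subset) auto
  have IH: "threshold_graph (p ` {1..k}) (Gr k p t)" using Suc.IH inj .
  have notin: "p (Suc k) \<notin> p ` {1..k}"
  proof
    assume "p (Suc k) \<in> p ` {1..k}"
    then obtain x where x: "x \<in> {1..k}" "p (Suc k) = p x" by auto
    then have "Suc k = x" using inj_onD[OF Suc.prems] by auto
    then show False using x by auto
  qed
  have img: "p ` {1..Suc k} = insert (p (Suc k)) (p ` {1..k})" by (auto simp: atLeastAtMostSuc_conv)
  show ?case
  proof (cases "t (Suc k)")
    case True
    have "Gr (Suc k) p t = Gr k p t \<union> {{p (Suc k), u} | u. u \<in> p ` {1..k}}"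
      using True by (auto simp: Gr_Suc insert_commute)
    then show ?thesis using threshold_graph.dominating[OF IH notin] img by simp
  next
    case False
    then show ?thesis using threshold_graph.isolated[OF IH notin] img by (simp add: Gr_Suc)
  qed
qed

lemma bij_ext:
  assumes "bij_betw p {1..k} V" "v \<notin> V"
  shows "bij_betw (p(Suc k := v)) {1..Suc k} (insert v V)"
proof -
  have "bij_betw (p(Suc k := v)) {1..k} V"
    using assms(1) by (rule bij_betw_cong[THEN iffD1, rotated]) auto
  then have "bij_betw (p(Suc k := v)) ({1..k} \<union> {Suc k}) (V \<union> {(p(Suc k := v)) (Suc k)})"
    using notIn_Un_bij_betw3[of "Suc k" "{1..k}" "p(Suc k := v)" V] assms(2) by auto
  moreover have "{1..k} \<union> {Suc k} = {1..Suc k}" by auto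
  ultimately show ?thesis by simp
qed

lemma threshold_rep:
  "threshold_graph V E \<Longrightarrow> finite V \<and> (\<exists>p t. bij_betw p {1..card V} V \<and> E = Gr (card V) p t)"
proof (induction rule: threshold_graph.induct)
  case empty
  show ?case by (intro conjI exI[of _ id] exI[of _ "\<lambda>_. False"]) (simp_all add: Gr_0 bij_betw_def)
next
  case (isolated V E v)
  have fin: "finite V" and ex: "\<exists>p t. bij_betw p {1..card V} V \<and> E = Gr (card V) p t" using isolated.IH by blast+
  obtain p t where bp: "bij_betw p {1..card V} V" and E: "E = Gr (card V) p t" using ex by blast
  define k where "k = card V"
  have ck: "card (insert v V) = Suc k" using fin isolated.hyps(2) k_def by simp
  define p' where "p' = p(Suc k := v)"
  define t' where "t' = t(Suc k := False)"
  have bp': "bij_betw p' {1..Suc k} (insert v V)" unfolding p'_def k_def using bij_ext[OF bp isolated.hyps(2)] .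
  have "Gr (Suc k) p' t' = Gr k p' t'" by (simp add: Gr_Suc t'_def)
  also have "\<dots> = Gr k p t" by (rule Gr_cong) (auto simp: p'_def t'_def)
  finally have "E = Gr (card (insert v V)) p' t'" using E ck k_def by simp
  moreover have "finite (insert v V)" using fin by simp
  ultimately show ?case using bp' ck by (intro conjI exI[of _ p'] exI[of _ t']) simp_all
next
  case (dominating V E v)
  have fin: "finite V" and ex: "\<exists>p t. bij_betw p {1..card V} V \<and> E = Gr (card V) p t" using dominating.IH by blast+
  obtain p t where bp: "bij_betw p {1..card V} V" and E: "E = Gr (card V) p t" using ex by blast
  define k where "k = card V"
  have ck: "card (insert v V) = Suc k" using fin dominating.hyps(2) k_def by simp
  define p' where "p' = p(Suc k := v)"
  define t' where "t' = t(Suc k := True)"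
  have bp': "bij_betw p' {1..Suc k} (insert v V)" unfolding p'_def k_def using bij_ext[OF bp dominating.hyps(2)] .
  have V: "V = p ` {1..k}" using bp k_def by (simp add: bij_betw_def)
  have X: "{{p' i, p' (Suc k)} | i. 1 \<le> i \<and> i \<le> k} = {{v, u} | u. u \<in> V}"
  proof
    show "{{p' i, p' (Suc k)} | i. 1 \<le> i \<and> i \<le> k} \<subseteq> {{v, u} | u. u \<in> V}"
    proof
      fix e assume "e \<in> {{p' i, p' (Suc k)} | i. 1 \<le> i \<and> i \<le> k}"
      then obtain i where i: "e = {p' i, p' (Suc k)}" "1 \<le> i" "i \<le> k" by blast
      then have "e = {v, p i}" by (simp add: p'_def insert_commute)
      moreover have "p i \<in> V" using V i by auto
      ultimately show "e \<in> {{v, u} | u. u \<in> V}" by blast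
    qed
  next
    show "{{v, u} | u. u \<in> V} \<subseteq> {{p' i, p' (Suc k)} | i. 1 \<le> i \<and> i \<le> k}"
    proof
      fix e assume "e \<in> {{v, u} | u. u \<in> V}"
      then obtain u where u: "e = {v, u}" "u \<in> V" by blast
      then obtain i where i: "i \<in> {1..k}" "u = p i" using V by auto
      then have "e = {p' i, p' (Suc k)}" using u by (simp add: p'_def insert_commute)
      then show "e \<in> {{p' i, p' (Suc k)} | i. 1 \<le> i \<and> i \<le> k}" using i by auto
    qed
  qed
  have "Gr (Suc k) p' t' = Gr k p' t' \<union> {{p' i, p' (Suc k)} | i. 1 \<le> i \<and> i \<le> k}"
    by (simp add: Gr_Suc t'_def)
  also have "Gr k p' t' = Gr k p t" by (rule Gr_cong) (auto simp: p'_def t'_def)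
  finally have "E \<union> {{v, u} | u. u \<in> V} = Gr (card (insert v V)) p' t'" using E ck k_def X by simp
  moreover have "finite (insert v V)" using fin by simp
  ultimately show ?case using bp' ck by (intro conjI exI[of _ p'] exI[of _ t']) simp_all
qed

lemma univ_top:
  assumes "inj_on p {1..K}" "V = p ` {1..K}" "1 \<le> K"
  shows "univ V (Gr K p t) (t K) (p K)"
  unfolding univ_def
proof (intro conjI ballI impI)
  show "p K \<in> V" using assms by auto
next
  fix u assume "u \<in> V" "u \<noteq> p K"
  then obtain a where a: "a \<in> {1..K}" "u = p a" using assms by auto
  then have "a < K" using \<open>u \<noteq> p K\<close> by (cases "a = K") auto
  then show "({u, p K} \<in> Gr K p t) = t K" using Gr_edge[OF assms(1)] a by auto
qed

lemma mono_chain: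
  "(\<forall>j. i \<le> j \<and> j < K \<longrightarrow> (p::nat\<Rightarrow>nat) j < p (Suc j)) \<Longrightarrow> i \<le> K \<Longrightarrow> p i \<le> p K"
proof (induction K)
  case 0 then show ?case by simp
next
  case (Suc K)
  show ?case
  proof (cases "i = Suc K")
    case False
    then have "i \<le> K" using Suc.prems by simp
    then have "p i \<le> p K" using Suc by simp
    also have "p K < p (Suc K)" using Suc.prems \<open>i \<le> K\<close> by simp
    finally show ?thesis by simp
  qed simp
qed

lemma univ_le:
  assumes inj: "inj_on p {1..K}" and V: "V = p ` {1..K}" and K: "2 \<le> K"
    and c: "canon K p t" and u: "univ V (Gr K p t) \<tau> (p i)" and i: "1 \<le> i" "i \<le> K"
  shows "p i \<le> p K"
proof -
  have tj: "t j = \<tau>" if "i < j" "j \<le> K" for j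
  proof -
    have "p j \<in> V" using V that i by auto
    moreover have "p j \<noteq> p i" using inj_onD[OF inj, of j i] that i by auto
    ultimately have "({p j, p i} \<in> Gr K p t) = \<tau>" using u unfolding univ_def by auto
    moreover have "({p i, p j} \<in> Gr K p t) = t j" using Gr_edge[OF inj i(1) that(1) that(2)] .
    ultimately show ?thesis by (simp add: insert_commute)
  qed
  have ti: "t i = \<tau>"
  proof (cases "i = 1")
    case True
    then have "t 2 = \<tau>" using tj K by auto
    then show ?thesis using c True unfolding canon_def by auto
  next
    case False
    then have i1: "1 \<le> i - 1" "i - 1 < i" using i by auto
    have im: "i - 1 \<in> {1..K}" using i1 i by auto
    then have "p (i - 1) \<in> V" using V by auto
    moreover have "p (i - 1) \<noteq> p i"
    proof
      assume "p (i - 1) = p i"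
      then have "i - 1 = i" using inj_onD[OF inj] im i by auto
      then show False using i1 by simp
    qed
    ultimately have "({p (i - 1), p i} \<in> Gr K p t) = \<tau>" using u unfolding univ_def by auto
    moreover have "({p (i - 1), p i} \<in> Gr K p t) = t i" using Gr_edge[OF inj i1(1) i1(2) i(2)] .
    ultimately show ?thesis by simp
  qed
  have "\<forall>j. i \<le> j \<and> j < K \<longrightarrow> p j < p (Suc j)"
  proof (intro allI impI)
    fix j assume j: "i \<le> j \<and> j < K"
    have "t j = \<tau>" using ti tj j by (cases "j = i") auto
    moreover have "t (Suc j) = \<tau>" using tj j by auto
    ultimately show "p j < p (Suc j)" using c j i unfolding canon_def by auto
  qed
  then show ?thesis using mono_chain i by blast
qed

lemma no_two_univ:
  assumes "univ V E \<tau> v" "univ V E (\<not> \<tau>) w" "x \<in> V" "y \<in> V" "x \<noteq> y"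
  shows False
proof (cases "v = w")
  case True
  obtain z where z: "z \<in> V" "z \<noteq> v" using assms by blast
  then show False using assms True unfolding univ_def by auto
next
  case False
  have "v \<in> V" "w \<in> V" using assms unfolding univ_def by auto
  then have "({w, v} \<in> E) = \<tau>" "({v, w} \<in> E) = (\<not> \<tau>)" using assms False unfolding univ_def by auto
  then show False by (simp add: insert_commute)
qed

lemma img_minus:
  assumes "inj_on p {1..Suc k}"
  shows "p ` {1..k} = p ` {1..Suc k} - {p (Suc k)}"
proof -
  have "p (Suc k) \<notin> p ` {1..k}"
  proof
    assume "p (Suc k) \<in> p ` {1..k}"
    then obtain x where x: "x \<in> {1..k}" "p (Suc k) = p x" by auto
    then have "Suc k = x" using inj_onD[OF assms] by auto
    then show False using x by auto
  qed
  then show ?thesis by (auto simp: atLeastAtMostSuc_conv)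
qed

lemma Gr_restrict:
  assumes "inj_on p {1..Suc k}"
  shows "Gr k p t = {e \<in> Gr (Suc k) p t. p (Suc k) \<notin> e}"
proof -
  have "p (Suc k) \<notin> e" if e: "e \<in> Gr k p t" for e
  proof -
    obtain i j where ij: "e = {p i, p j}" "1 \<le> i" "i < j" "j \<le> k" using e unfolding Gr_def by blast
    have "p (Suc k) \<noteq> p i" "p (Suc k) \<noteq> p j" using inj_onD[OF assms, of "Suc k"] ij by force+
    then show ?thesis using ij by auto
  qed
  then show ?thesis by (auto simp: Gr_Suc)
qed

lemma canon_restrict: "canon (Suc k) p t \<Longrightarrow> canon k p t"
  unfolding canon_def by auto

lemma gr_inj:
  "1 \<le> k \<Longrightarrow> bij_betw p {1..k} V \<Longrightarrow> bij_betw q {1..k} V \<Longrightarrow> canon k p t \<Longrightarrow> canon k q s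
   \<Longrightarrow> Gr k p t = Gr k q s \<Longrightarrow> (\<forall>i\<in>{1..k}. p i = q i) \<and> (\<forall>i\<in>{2..k}. t i = s i)"
proof (induction k arbitrary: V)
  case 0 then show ?case by simp
next
  case (Suc k)
  show ?case
  proof (cases "k = 0")
    case True
    have "V = p ` {1..1}" "V = q ` {1..1}" using Suc.prems True by (auto simp: bij_betw_def)
    then have "p 1 = q 1" by auto
    then show ?thesis using True by auto
  next
    case False
    define K where "K = Suc k"
    have injp: "inj_on p {1..K}" and Vp: "V = p ` {1..K}" using Suc.prems K_def by (auto simp: bij_betw_def)
    have injq: "inj_on q {1..K}" and Vq: "V = q ` {1..K}" using Suc.prems K_def by (auto simp: bij_betw_def)
    have K2: "2 \<le> K" using False K_def by simp
    have cp: "canon K p t" and cq: "canon K q s" using Suc.prems K_def by auto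
    define E where "E = Gr K p t"
    have E2: "E = Gr K q s" using Suc.prems E_def K_def by simp
    have u1: "univ V E (t K) (p K)" unfolding E_def using univ_top[OF injp Vp] K2 by simp
    have u2: "univ V E (s K) (q K)" unfolding E2 using univ_top[OF injq Vq] K2 by simp
    have x: "p 1 \<in> V" "p K \<in> V" "p 1 \<noteq> p K" using Vp K2 inj_onD[OF injp, of 1 K] by auto
    have tK: "s K = t K"
    proof (rule ccontr)
      assume "s K \<noteq> t K"
      then have "univ V E (\<not> t K) (q K)" using u2 by (cases "t K") auto
      then show False using no_two_univ[OF u1 _ x] by blast
    qed
    have "q K \<in> p ` {1..K}" using Vp Vq K2 by auto
    then obtain i where i: "i \<in> {1..K}" "q K = p i" by auto
    have "p i \<le> p K" using univ_le[OF injp Vp K2 cp, of "t K" i] u2 i tK E_def by auto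
    have "p K \<in> q ` {1..K}" using Vp Vq K2 by auto
    then obtain j where j: "j \<in> {1..K}" "p K = q j" by auto
    have "q j \<le> q K" using univ_le[OF injq Vq K2 cq, of "s K" j] u1 j tK E2 by auto
    have pK: "p K = q K" using \<open>p i \<le> p K\<close> \<open>q j \<le> q K\<close> i j by simp
    define V' where "V' = p ` {1..k}"
    have b1: "bij_betw p {1..k} V'" unfolding V'_def
      using injp K_def by (auto intro: inj_on_subset simp: bij_betw_def)
    have "p ` {1..k} = V - {p K}" using img_minus[of p k] injp K_def Vp by simp
    moreover have "q ` {1..k} = V - {q K}" using img_minus[of q k] injq K_def Vq by simp
    ultimately have "q ` {1..k} = V'" unfolding V'_def using pK by simp
    then have b2: "bij_betw q {1..k} V'"
      using injq K_def by (auto intro: inj_on_subset simp: bij_betw_def)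
    have "Gr k p t = Gr k q s"
      using Gr_restrict[of p k t] Gr_restrict[of q k s] injp injq K_def E_def E2 pK by simp
    then have IH: "(\<forall>i\<in>{1..k}. p i = q i) \<and> (\<forall>i\<in>{2..k}. t i = s i)"
      using Suc.IH[OF _ b1 b2 canon_restrict[OF Suc.prems(4)] canon_restrict[OF Suc.prems(5)]] False by simp
    show ?thesis
    proof (intro conjI ballI)
      fix i assume "i \<in> {1..Suc k}"
      then show "p i = q i" using IH pK K_def by (cases "i = Suc k") auto
    next
      fix i assume "i \<in> {2..Suc k}"
      then show "t i = s i" using IH tK K_def by (cases "i = Suc k") auto
    qed
  qed
qed

lemma Gr_swap_sub:
  assumes "1 \<le> i" "Suc i \<le> n" "t i = t (Suc i)"
  shows "Gr n (p \<circ> transpose i (Suc i)) t \<subseteq> Gr n p t"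
proof
  fix e assume "e \<in> Gr n (p \<circ> transpose i (Suc i)) t"
  then obtain a b where ab: "e = {p (transpose i (Suc i) a), p (transpose i (Suc i) b)}"
    "1 \<le> a" "a < b" "b \<le> n" "t b" unfolding Gr_def by auto
  show "e \<in> Gr n p t"
  proof (cases "a = i \<and> b = Suc i")
    case True
    then have "e = {p i, p (Suc i)}" using ab by (auto simp: insert_commute)
    then show ?thesis unfolding Gr_def using True ab by blast
  next
    case False
    have "transpose i (Suc i) a < transpose i (Suc i) b" "1 \<le> transpose i (Suc i) a"
      "transpose i (Suc i) b \<le> n" "t (transpose i (Suc i) b) = t b"
      using False ab assms by (auto simp: transpose_def)
    then show ?thesis unfolding Gr_def using ab by blast
  qed
qed

lemma Gr_swap:
  assumes "1 \<le> i" "Suc i \<le> n" "t i = t (Suc i)"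
  shows "Gr n (p \<circ> transpose i (Suc i)) t = Gr n p t"
proof
  show "Gr n (p \<circ> transpose i (Suc i)) t \<subseteq> Gr n p t" using Gr_swap_sub[OF assms] .
  have "(p \<circ> transpose i (Suc i)) \<circ> transpose i (Suc i) = p" by (rule ext) (simp add: transpose_def)
  then show "Gr n p t \<subseteq> Gr n (p \<circ> transpose i (Suc i)) t"
    using Gr_swap_sub[OF assms, of "p \<circ> transpose i (Suc i)"] by simp
qed

lemma W_swap:
  assumes "1 \<le> i" "Suc i \<le> n" "(p::nat\<Rightarrow>nat) (Suc i) < p i"
  shows "(\<Sum>j\<in>{1..n}. j * p j) < (\<Sum>j\<in>{1..n}. j * (p \<circ> transpose i (Suc i)) j)"
proof -
  define S' where "S' = {1..n} - {i} - {Suc i}"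
  have split: "sum f {1..n} = f i + (f (Suc i) + sum f S')" for f :: "nat \<Rightarrow> nat"
  proof -
    have "sum f {1..n} = f i + sum f ({1..n} - {i})" using assms by (intro sum.remove) auto
    also have "sum f ({1..n} - {i}) = f (Suc i) + sum f S'" unfolding S'_def using assms by (intro sum.remove) auto
    finally show ?thesis .
  qed
  have same: "(\<Sum>j\<in>S'. j * (p \<circ> transpose i (Suc i)) j) = (\<Sum>j\<in>S'. j * p j)"
    by (rule sum.cong) (auto simp: S'_def transpose_def)
  have ar: "i * p i + Suc i * p (Suc i) < i * p (Suc i) + Suc i * p i" using assms(3) by (simp add: algebra_simps)
  have e1: "(\<Sum>j\<in>{1..n}. j * p j) = i * p i + (Suc i * p (Suc i) + (\<Sum>j\<in>S'. j * p j))"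
    by (rule split)
  have e2: "(\<Sum>j\<in>{1..n}. j * (p \<circ> transpose i (Suc i)) j) = i * p (Suc i) + (Suc i * p i + (\<Sum>j\<in>S'. j * p j))"
    using split[of "\<lambda>j. j * (p \<circ> transpose i (Suc i)) j"] same by (simp add: transpose_def)
  show ?thesis unfolding e1 e2 using ar by simp
qed

lemma tA_1: "tA A 1 = (1 \<in> A)" by (simp add: One_nat_def)
lemma tA_2: "tA A 2 = tA A 1" by (simp add: numeral_2_eq_2)
lemma tA_Suc2: "2 \<le> i \<Longrightarrow> (i \<in> A \<longleftrightarrow> tA A (Suc i) = tA A i)" by simp

lemma canon_P:
  assumes "(p, A) \<in> P n"
  shows "canon n p (tA A)"
  unfolding canon_def
proof (intro conjI allI impI)
  show "tA A 1 = tA A 2" by (simp add: tA_2)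
next
  fix i assume i: "1 \<le> i \<and> i < n \<and> tA A i = tA A (Suc i)"
  show "p i < p (Suc i)"
  proof (cases "i = 1")
    case True
    then show ?thesis using assms unfolding P_def S_plus_def by (simp add: numeral_2_eq_2)
  next
    case False
    then have "i \<in> A" using tA_Suc2[of i A] i by auto
    then show ?thesis using assms unfolding P_def Asc_def by auto
  qed
qed

lemma surj_part:
  assumes n: "2 \<le> n" and E: "threshold_graph {1..n} E"
  shows "\<exists>p A. (p, A) \<in> P n \<and> E = Gr n p (tA A)"
proof -
  obtain p0 t0 where bp: "bij_betw p0 {1..n} {1..n}" and E0: "E = Gr n p0 t0"
    using threshold_rep[OF E] by auto
  define p1 where "p1 = (\<lambda>i. if i \<in> {1..n} then p0 i else i)"
  have "bij_betw p1 {1..n} {1..n}" using bp by (rule bij_betw_cong[THEN iffD1, rotated]) (simp add: p1_def)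
  moreover have "p1 x = x" if "x \<notin> {1..n}" for x using that unfolding p1_def by auto
  ultimately have p1: "p1 permutes {1..n}" by (rule bij_imp_permutes)
  define t1 where "t1 = t0(1 := t0 2)"
  have E1: "E = Gr n p1 t1" unfolding E0 by (rule Gr_cong) (auto simp: p1_def t1_def)
  define S where "S = {q. q permutes {1..n} \<and> E = Gr n q t1}"
  define W where "W = (\<lambda>q::nat\<Rightarrow>nat. \<Sum>i\<in>{1..n}. i * q i)"
  have finS: "finite S" unfolding S_def
    by (rule finite_subset[OF _ finite_permutations[of "{1..n}"]]) auto
  have "p1 \<in> S" using p1 E1 unfolding S_def by auto
  then have "Max (W ` S) \<in> W ` S" using finS by (intro Max_in) auto
  then obtain p where pS: "p \<in> S" and pM: "W p = Max (W ` S)" by auto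
  have pmax: "W q \<le> W p" if "q \<in> S" for q using pM finS that by simp
  have pp: "p permutes {1..n}" and Ep: "E = Gr n p t1" using pS unfolding S_def by auto
  have c: "canon n p t1" unfolding canon_def
  proof (intro conjI allI impI)
    show "t1 1 = t1 2" by (simp add: t1_def)
  next
    fix i assume i: "1 \<le> i \<and> i < n \<and> t1 i = t1 (Suc i)"
    show "p i < p (Suc i)"
    proof (rule ccontr)
      assume "\<not> p i < p (Suc i)"
      moreover have "p i \<noteq> p (Suc i)" using permutes_inj[OF pp] by (auto dest: injD)
      ultimately have lt: "p (Suc i) < p i" by simp
      define q where "q = p \<circ> transpose i (Suc i)"
      have "transpose i (Suc i) permutes {1..n}" using i by (intro permutes_swap_id) auto
      then have "q permutes {1..n}" unfolding q_def using pp by (rule permutes_compose)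
      moreover have "E = Gr n q t1" unfolding q_def using Ep Gr_swap[of i n t1 p] i by simp
      ultimately have "q \<in> S" unfolding S_def by auto
      then have "W q \<le> W p" by (rule pmax)
      moreover have "W p < W q" unfolding W_def q_def using W_swap[of i n p] i lt by simp
      ultimately show False by simp
    qed
  qed
  define A where "A = {j. 2 \<le> j \<and> j < n \<and> t1 j = t1 (Suc j)} \<union> (if t1 1 then {1} else {})"
  have tAeq: "1 \<le> j \<longrightarrow> j \<le> n \<longrightarrow> tA A j = t1 j" for j
  proof (induction j)
    case 0 then show ?case by simp
  next
    case (Suc j)
    show ?case
    proof (cases "j = 0")
      case True then show ?thesis by (simp add: A_def)
    next
      case False
      show ?thesis
      proof (cases "j = 1")
        case True
        then show ?thesis using Suc.IH by (simp add: A_def t1_def numeral_2_eq_2)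
      next
        case False
        then show ?thesis using Suc.IH \<open>j \<noteq> 0\<close> by (auto simp: A_def)
      qed
    qed
  qed
  have p12: "p 1 < p 2" using c n unfolding canon_def by (auto simp: numeral_2_eq_2)
  have "A \<subseteq> Asc n p"
  proof
    fix j assume "j \<in> A"
    then have "(2 \<le> j \<and> j < n \<and> t1 j = t1 (Suc j)) \<or> j = 1" unfolding A_def by (auto split: if_splits)
    then show "j \<in> Asc n p"
    proof
      assume "2 \<le> j \<and> j < n \<and> t1 j = t1 (Suc j)"
      then show ?thesis using c unfolding canon_def Asc_def by auto
    next
      assume "j = 1"
      then show ?thesis using p12 n unfolding Asc_def by (auto simp: numeral_2_eq_2)
    qed
  qed
  then have "(p, A) \<in> P n" using pp p12 unfolding P_def S_plus_def by auto
  moreover have "E = Gr n p (tA A)" unfolding Ep by (rule Gr_cong) (use tAeq in auto)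
  ultimately show ?thesis by blast
qed

theorem proposition5:
  fixes n :: nat
  assumes "n \<ge> 2"
  shows "\<exists>f. bij_betw f (T n) (P n)"
proof -
  define F where "F = (\<lambda>(p, A). Gr n p (tA A))"
  have inj: "inj_on F (P n)"
  proof (rule inj_onI)
    fix x y assume x: "x \<in> P n" and y: "y \<in> P n" and Fxy: "F x = F y"
    obtain p A where xpA: "x = (p, A)" by (cases x)
    obtain q B where yqB: "y = (q, B)" by (cases y)
    have pp: "p permutes {1..n}" and qp: "q permutes {1..n}"
      using x y xpA yqB unfolding P_def S_plus_def by auto
    have "(\<forall>i\<in>{1..n}. p i = q i) \<and> (\<forall>i\<in>{2..n}. tA A i = tA B i)"
      using gr_inj[of n p "{1..n}" q "tA A" "tA B"] assms permutes_imp_bij[OF pp] permutes_imp_bij[OF qp]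
        canon_P[of p A n] canon_P[of q B n] x y xpA yqB Fxy unfolding F_def by auto
    then have eqp: "\<forall>i\<in>{1..n}. p i = q i" and eqt: "\<forall>i\<in>{2..n}. tA A i = tA B i" by auto
    have "p = q"
    proof
      fix i show "p i = q i" using eqp permutes_not_in[OF pp, of i] permutes_not_in[OF qp, of i] by (cases "i \<in> {1..n}") auto
    qed
    have AB: "A \<subseteq> {1..n-1}" "B \<subseteq> {1..n-1}" using x y xpA yqB unfolding P_def Asc_def by auto
    have "j \<in> A \<longleftrightarrow> j \<in> B" if j: "j \<in> {1..n-1}" for j
    proof (cases "j = 1")
      case True
      have "tA A 2 = tA B 2" using eqt assms by auto
      then show ?thesis using True tA_1[of A] tA_1[of B] tA_2[of A] tA_2[of B] by simp
    next
      case False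
      then have "2 \<le> j" using j by simp
      moreover have "tA A j = tA B j" "tA A (Suc j) = tA B (Suc j)" using eqt j \<open>2 \<le> j\<close> by (auto simp del: tA.simps)
      ultimately show ?thesis using tA_Suc2[of j A] tA_Suc2[of j B] by (simp del: tA.simps)
    qed
    then have "A = B" using AB by blast
    then show "x = y" using xpA yqB \<open>p = q\<close> by simp
  qed
  have img: "F ` P n = T n"
  proof
    show "F ` P n \<subseteq> T n"
    proof
      fix E assume "E \<in> F ` P n"
      then obtain p A where pA: "(p, A) \<in> P n" "E = Gr n p (tA A)" unfolding F_def by auto
      then have pp: "p permutes {1..n}" unfolding P_def S_plus_def by auto
      have "threshold_graph (p ` {1..n}) (Gr n p (tA A))"
        by (rule Gr_threshold) (rule permutes_inj_on[OF pp])
      then show "E \<in> T n" using pA permutes_image[OF pp] unfolding T_def by simp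
    qed
  next
    show "T n \<subseteq> F ` P n"
    proof
      fix E assume "E \<in> T n"
      then obtain p A where "(p, A) \<in> P n" "E = Gr n p (tA A)"
        using surj_part[OF assms] unfolding T_def by blast
      then show "E \<in> F ` P n" unfolding F_def by force
    qed
  qed
  have "bij_betw F (P n) (T n)" using inj img by (simp add: bij_betw_def)
  then have "bij_betw (the_inv_into (P n) F) (T n) (P n)" by (rule bij_betw_the_inv_into)
  then show ?thesis by blast
qed

end
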